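(* Let $a,b,e\in\mathbb{R}$ with $b\ne0$, and let $\alpha_i(t)$ ($i=1,\dots,4$) be scalar continuous functions. (i) Suppose $b\alpha_1(t)+\alpha_3(t)$ is $2\pi/|b|$-periodic and odd, and $a(a+e)<0$. Then the solution $$x(t)=\sqrt{-a(a+e)}\sin\Big(bt+\int_0^t(b\alpha_1(s)+\alpha_3(s))ds\Big),\ y(t)=\sqrt{-a(a+e)}\cos\Big(bt+\int_0^t(b\alpha_1(s)+\alpha_3(s))ds\Big),\ z(t)=-a$$ of the system $$\begin{aligned}\dot x&=(ax+by+xz)(1+\alpha_1(t))+x(a+z)\alpha_2(t)+y\alpha_3(t),\\ \dot y&=(-bx+ay+yz)(1+\alpha_1(t))+y(a+z)\alpha_2(t)-x\alpha_3(t),\\ \dot z&=(ez-x^2-y^2-z^2)(1+\alpha_1(t)+\alpha_2(t))\end{aligned}$$ is $2\pi/|b|$-periodic (the period not necessarily minimal). (ii) Suppose $b\alpha_1(t)+\alpha_3(t)+a^4\alpha_4(t)$ is $2\pi/|b|$-periodic and odd. Then the solution $$x(t)=a\sin\Big(bt+\int_0^t(b\alpha_1(s)+\alpha_3(s)+a^4\alpha_4(s))ds\Big),\ y(t)=a\cos\Big(bt+\int_0^t(b\alpha_1(s)+\alpha_3(s)+a^4\alpha_4(s))ds\Big),\ z(t)=-a$$ of the system $$\begin{aligned}\dot x&=(ax+by+xz)(1+\alpha_1(t))+x(a+z)\alpha_2(t)+y\alpha_3(t)-y(x^2+y^2)(4az+x^2+y^2+2z^2)\alpha_4(t),\\ \dot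 y&=(-bx+ay+yz)(1+\alpha_1(t))+y(a+z)\alpha_2(t)-x\alpha_3(t)+x(x^2+y^2)(4az+x^2+y^2+2z^2)\alpha_4(t),\\ \dot z&=-(2az+x^2+y^2+z^2)(1+\alpha_1(t)+\alpha_2(t))\end{aligned}$$ is $2\pi/|b|$-periodic (the period not necessarily minimal). *)

theory Defs
  imports "HOL-Analysis.Analysis"
begin

definition oint0 :: "(real \<Rightarrow> real) \<Rightarrow> real \<Rightarrow> real" where
  "oint0 g t = (if 0 \<le> t then integral {0..t} g else - integral {t..0} g)"

definition periodic_with :: "real \<Rightarrow> (real \<Rightarrow> 'a) \<Rightarrow> bool" where
  "periodic_with T f \<longleftrightarrow> (\<forall>t. f (t + T) = f t)"

definition odd_fun :: "(real \<Rightarrow> real) \<Rightarrow> bool" where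
  "odd_fun g \<longleftrightarrow> (\<forall>t. g (- t) = - g t)"

end

theory Submission
  imports Defs
begin


lemma oint0_deriv:
  assumes g: "continuous_on UNIV g"
  shows "(oint0 g has_real_derivative g t) (at t)"
proof -
  define c where "c = - \<bar>t\<bar> - 1"
  define d where "d = \<bar>t\<bar> + 1"
  have ct: "c < t" "t < d" "c < 0" "0 < d" unfolding c_def d_def by auto
  have gc: "continuous_on {c..d} g" using g continuous_on_subset by blast
  have "((\<lambda>s. integral {c..s} g) has_real_derivative g t) (at t within {c..d})"
    using integral_has_real_derivative[OF gc] ct by auto
  then have D: "((\<lambda>s. integral {c..s} g) has_real_derivative g t) (at t)"
    using at_within_Icc_at[OF ct(1) ct(2)] by simp
  have D2: "((\<lambda>s. integral {c..s} g - integral {c..0} g) has_real_derivative g t) (at t)"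
    using DERIV_diff[OF D DERIV_const] by simp
  show ?thesis
  proof (rule has_field_derivative_transform_within_open[OF D2, of "{c<..<d}"])
    show "open {c<..<d}" by simp
    show "t \<in> {c<..<d}" using ct by simp
    fix s assume s: "s \<in> {c<..<d}"
    have int: "\<And>u v. g integrable_on {u..v}"
      using g by (meson continuous_on_subset integrable_continuous_real subset_UNIV)
    show "integral {c..s} g - integral {c..0} g = oint0 g s"
    proof (cases "0 \<le> s")
      case True
      have "integral {c..0} g + integral {0..s} g = integral {c..s} g"
        using Henstock_Kurzweil_Integration.integral_combine[of c 0 s g] True ct int by auto
      then show ?thesis using True by (simp add: oint0_def)
    next
      case False
      have "integral {c..s} g + integral {s..0} g = integral {c..0} g"
        using Henstock_Kurzweil_Integration.integral_combine[of c s 0 g] False s int by auto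
      then show ?thesis using False by (simp add: oint0_def)
    qed
  qed
qed

lemma oint0_even:
  assumes g: "continuous_on UNIV g" and od: "odd_fun g"
  shows "oint0 g (- s) = oint0 g s"
proof -
  have "\<forall>x. ((\<lambda>s. oint0 g (- s) - oint0 g s) has_real_derivative 0) (at x)"
  proof
    fix x
    have "((\<lambda>s. oint0 g (- s)) has_real_derivative g (- x) * (- 1)) (at x)"
      using DERIV_chain2[OF oint0_deriv[OF g, of "- x"] DERIV_minus[OF DERIV_ident]] by simp
    from DERIV_diff[OF this oint0_deriv[OF g, of x]]
    show "((\<lambda>s. oint0 g (- s) - oint0 g s) has_real_derivative 0) (at x)"
      using od unfolding odd_fun_def by simp
  qed
  then have "oint0 g (- s) - oint0 g s = oint0 g (- 0) - oint0 g 0" by (rule DERIV_isconst_all)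
  then show ?thesis by simp
qed

lemma oint0_periodic:
  assumes g: "continuous_on UNIV g" and od: "odd_fun g" and per: "periodic_with T g"
  shows "oint0 g (t + T) = oint0 g t"
proof -
  have "\<forall>x. ((\<lambda>s. oint0 g (s + T) - oint0 g s) has_real_derivative 0) (at x)"
  proof
    fix x
    have "((\<lambda>s. oint0 g (s + T)) has_real_derivative g (x + T) * 1) (at x)"
      using DERIV_chain2[OF oint0_deriv[OF g, of "x + T"] DERIV_add[OF DERIV_ident DERIV_const]] by simp
    from DERIV_diff[OF this oint0_deriv[OF g, of x]]
    show "((\<lambda>s. oint0 g (s + T) - oint0 g s) has_real_derivative 0) (at x)"
      using per unfolding periodic_with_def by simp
  qed
  then have "oint0 g (t + T) - oint0 g t = oint0 g (- (T/2) + T) - oint0 g (- (T/2))"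
    by (rule DERIV_isconst_all)
  also have "\<dots> = 0" using oint0_even[OF g od, of "T/2"] by simp
  finally show ?thesis by simp
qed

lemma theta_facts:
  fixes b r :: real
  assumes b: "b \<noteq> 0" and g: "continuous_on UNIV g" and od: "odd_fun g"
    and per: "periodic_with (2 * pi / \<bar>b\<bar>) g"
  shows "((\<lambda>t. r * sin (b * t + oint0 g t)) has_real_derivative
            r * cos (b * t + oint0 g t) * (b + g t)) (at t)"
    and "((\<lambda>t. r * cos (b * t + oint0 g t)) has_real_derivative
            - (r * sin (b * t + oint0 g t)) * (b + g t)) (at t)"
    and "periodic_with (2 * pi / \<bar>b\<bar>) (\<lambda>t. r * sin (b * t + oint0 g t))"
    and "periodic_with (2 * pi / \<bar>b\<bar>) (\<lambda>t. r * cos (b * t + oint0 g t))"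
proof -
  have Dth: "((\<lambda>t. b * t + oint0 g t) has_real_derivative b + g t) (at t)"
    using DERIV_add[OF DERIV_cmult[OF DERIV_ident, of b] oint0_deriv[OF g]] by simp
  show "((\<lambda>t. r * sin (b * t + oint0 g t)) has_real_derivative
            r * cos (b * t + oint0 g t) * (b + g t)) (at t)"
    using DERIV_cmult[OF DERIV_chain2[OF DERIV_sin Dth], of r] by (simp add: mult.assoc)
  show "((\<lambda>t. r * cos (b * t + oint0 g t)) has_real_derivative
            - (r * sin (b * t + oint0 g t)) * (b + g t)) (at t)"
    using DERIV_cmult[OF DERIV_chain2[OF DERIV_cos Dth], of r] by (simp add: mult.assoc)
  have sh: "b * (t + 2 * pi / \<bar>b\<bar>) + oint0 g (t + 2 * pi / \<bar>b\<bar>)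
            = (b * t + oint0 g t) + (if b > 0 then 2 * pi else - (2 * pi))" for t
    using oint0_periodic[OF g od per, of t] b by (auto simp: field_simps)
  show "periodic_with (2 * pi / \<bar>b\<bar>) (\<lambda>t. r * sin (b * t + oint0 g t))"
    unfolding periodic_with_def using sh by (simp add: sin_add cos_add)
  show "periodic_with (2 * pi / \<bar>b\<bar>) (\<lambda>t. r * cos (b * t + oint0 g t))"
    unfolding periodic_with_def using sh by (simp add: sin_add cos_add)
qed

lemma alg1: fixes a b C S p q w :: real
  shows "C * (b + (b * p + q)) = (a * S + b * C + S * - a) * (1 + p) + S * (a + - a) * w + C * q"
  by algebra

lemma alg2: fixes a b C S p q w :: real
  shows "- S * (b + (b * p + q)) = (- b * S + a * C + C * - a) * (1 + p) + C * (a + - a) * w - S * q"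
  by algebra

lemma alg3: fixes a b C S p q w v :: real
  assumes h: "S\<^sup>2 + C\<^sup>2 = a\<^sup>2"
  shows "C * (b + (b * p + q + a ^ 4 * v)) = (a * S + b * C + S * - a) * (1 + p) + S * (a + - a) * w + C * q
     - C * (S\<^sup>2 + C\<^sup>2) * (4 * a * - a + S\<^sup>2 + C\<^sup>2 + 2 * (- a)\<^sup>2) * v"
  using h by algebra

lemma alg4: fixes a b C S p q w v :: real
  assumes h: "S\<^sup>2 + C\<^sup>2 = a\<^sup>2"
  shows "- S * (b + (b * p + q + a ^ 4 * v)) = (- b * S + a * C + C * - a) * (1 + p) + C * (a + - a) * w - S * q
     + S * (S\<^sup>2 + C\<^sup>2) * (4 * a * - a + S\<^sup>2 + C\<^sup>2 + 2 * (- a)\<^sup>2) * v"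
  using h by algebra

lemma alg5: fixes a C S :: real
  assumes h: "S\<^sup>2 + C\<^sup>2 = a\<^sup>2"
  shows "- (2 * a * - a + S\<^sup>2 + C\<^sup>2 + (- a)\<^sup>2) = 0"
  using h by algebra

theorem proposition1:
  fixes a b e :: real and \<alpha>1 \<alpha>2 \<alpha>3 \<alpha>4 :: "real \<Rightarrow> real"
  assumes "b \<noteq> 0"
    and "continuous_on UNIV \<alpha>1" and "continuous_on UNIV \<alpha>2"
    and "continuous_on UNIV \<alpha>3" and "continuous_on UNIV \<alpha>4"
  shows
   "(periodic_with (2 * pi / \<bar>b\<bar>) (\<lambda>t. b * \<alpha>1 t + \<alpha>3 t)
       \<and> odd_fun (\<lambda>t. b * \<alpha>1 t + \<alpha>3 t) \<and> a * (a + e) < 0 \<longrightarrow>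
     (let \<theta> = (\<lambda>t. b * t + oint0 (\<lambda>s. b * \<alpha>1 s + \<alpha>3 s) t);
          x = (\<lambda>t. sqrt (- a * (a + e)) * sin (\<theta> t));
          y = (\<lambda>t. sqrt (- a * (a + e)) * cos (\<theta> t));
          z = (\<lambda>t. - a)
      in (\<forall>t.
            (x has_real_derivative
               ((a * x t + b * y t + x t * z t) * (1 + \<alpha>1 t) + x t * (a + z t) * \<alpha>2 t
                + y t * \<alpha>3 t)) (at t)
          \<and> (y has_real_derivative
               ((- b * x t + a * y t + y t * z t) * (1 + \<alpha>1 t) + y t * (a + z t) * \<alpha>2 t
                - x t * \<alpha>3 t)) (at t)
          \<and> (z has_real_derivative
               ((e * z t - (x t)\<^sup>2 - (y t)\<^sup>2 - (z t)\<^sup>2) * (1 + \<alpha>1 t + \<alpha>2 t))) (at t))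
         \<and> periodic_with (2 * pi / \<bar>b\<bar>) x
         \<and> periodic_with (2 * pi / \<bar>b\<bar>) y
         \<and> periodic_with (2 * pi / \<bar>b\<bar>) z))
   \<and>
   (periodic_with (2 * pi / \<bar>b\<bar>) (\<lambda>t. b * \<alpha>1 t + \<alpha>3 t + a ^ 4 * \<alpha>4 t)
       \<and> odd_fun (\<lambda>t. b * \<alpha>1 t + \<alpha>3 t + a ^ 4 * \<alpha>4 t) \<longrightarrow>
     (let \<theta> = (\<lambda>t. b * t + oint0 (\<lambda>s. b * \<alpha>1 s + \<alpha>3 s + a ^ 4 * \<alpha>4 s) t);
          x = (\<lambda>t. a * sin (\<theta> t));
          y = (\<lambda>t. a * cos (\<theta> t));
          z = (\<lambda>t. - a)
      in (\<forall>t.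
            (x has_real_derivative
               ((a * x t + b * y t + x t * z t) * (1 + \<alpha>1 t) + x t * (a + z t) * \<alpha>2 t
                + y t * \<alpha>3 t
                - y t * ((x t)\<^sup>2 + (y t)\<^sup>2) * (4 * a * z t + (x t)\<^sup>2 + (y t)\<^sup>2 + 2 * (z t)\<^sup>2)
                  * \<alpha>4 t)) (at t)
          \<and> (y has_real_derivative
               ((- b * x t + a * y t + y t * z t) * (1 + \<alpha>1 t) + y t * (a + z t) * \<alpha>2 t
                - x t * \<alpha>3 t
                + x t * ((x t)\<^sup>2 + (y t)\<^sup>2) * (4 * a * z t + (x t)\<^sup>2 + (y t)\<^sup>2 + 2 * (z t)\<^sup>2)
                  * \<alpha>4 t)) (at t)
          \<and> (z has_real_derivative
               (- (2 * a * z t + (x t)\<^sup>2 + (y t)\<^sup>2 + (z t)\<^sup>2) * (1 + \<alpha>1 t + \<alpha>2 t))) (at t))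
         \<and> periodic_with (2 * pi / \<bar>b\<bar>) x
         \<and> periodic_with (2 * pi / \<bar>b\<bar>) y
         \<and> periodic_with (2 * pi / \<bar>b\<bar>) z))"
proof (intro conjI impI)
  assume H: "periodic_with (2 * pi / \<bar>b\<bar>) (\<lambda>t. b * \<alpha>1 t + \<alpha>3 t)
       \<and> odd_fun (\<lambda>t. b * \<alpha>1 t + \<alpha>3 t) \<and> a * (a + e) < 0"
  define g where "g = (\<lambda>t. b * \<alpha>1 t + \<alpha>3 t)"
  define r where "r = sqrt (- a * (a + e))"
  have gc: "continuous_on UNIV g" unfolding g_def
    by (intro continuous_intros assms)
  have per: "periodic_with (2 * pi / \<bar>b\<bar>) g" and od: "odd_fun g" using H unfolding g_def by blast+
  have r2: "r\<^sup>2 = - a * (a + e)" unfolding r_def using H by simp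
  have sc: "\<And>u. (r * sin u)\<^sup>2 + (r * cos u)\<^sup>2 = r\<^sup>2"
  proof -
    fix u
    have "(r * sin u)\<^sup>2 + (r * cos u)\<^sup>2 = r\<^sup>2 * ((sin u)\<^sup>2 + (cos u)\<^sup>2)"
      by (simp only: power_mult_distrib distrib_left)
    then show "(r * sin u)\<^sup>2 + (r * cos u)\<^sup>2 = r\<^sup>2" by (simp only: sin_cos_squared_add mult_1_right)
  qed
  note T = theta_facts[OF assms(1) gc od per, of r]
  show "let \<theta> = (\<lambda>t. b * t + oint0 (\<lambda>s. b * \<alpha>1 s + \<alpha>3 s) t);
          x = (\<lambda>t. sqrt (- a * (a + e)) * sin (\<theta> t));
          y = (\<lambda>t. sqrt (- a * (a + e)) * cos (\<theta> t));
          z = (\<lambda>t. - a)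
      in (\<forall>t.
            (x has_real_derivative
               ((a * x t + b * y t + x t * z t) * (1 + \<alpha>1 t) + x t * (a + z t) * \<alpha>2 t
                + y t * \<alpha>3 t)) (at t)
          \<and> (y has_real_derivative
               ((- b * x t + a * y t + y t * z t) * (1 + \<alpha>1 t) + y t * (a + z t) * \<alpha>2 t
                - x t * \<alpha>3 t)) (at t)
          \<and> (z has_real_derivative
               ((e * z t - (x t)\<^sup>2 - (y t)\<^sup>2 - (z t)\<^sup>2) * (1 + \<alpha>1 t + \<alpha>2 t))) (at t))
         \<and> periodic_with (2 * pi / \<bar>b\<bar>) x
         \<and> periodic_with (2 * pi / \<bar>b\<bar>) y
         \<and> periodic_with (2 * pi / \<bar>b\<bar>) z"
    unfolding Let_def g_def[symmetric] r_def[symmetric]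
  proof (intro conjI allI)
    fix t
    show "((\<lambda>t. r * sin (b * t + oint0 g t)) has_real_derivative
        (a * (r * sin (b * t + oint0 g t)) + b * (r * cos (b * t + oint0 g t)) + r * sin (b * t + oint0 g t) * - a) * (1 + \<alpha>1 t) +
        r * sin (b * t + oint0 g t) * (a + - a) * \<alpha>2 t + r * cos (b * t + oint0 g t) * \<alpha>3 t) (at t)"
      by (rule DERIV_cong[OF T(1)]) (simp only: g_def alg1)
    show "((\<lambda>t. r * cos (b * t + oint0 g t)) has_real_derivative
        (- b * (r * sin (b * t + oint0 g t)) + a * (r * cos (b * t + oint0 g t)) + r * cos (b * t + oint0 g t) * - a) * (1 + \<alpha>1 t) +
        r * cos (b * t + oint0 g t) * (a + - a) * \<alpha>2 t - r * sin (b * t + oint0 g t) * \<alpha>3 t) (at t)"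
      by (rule DERIV_cong[OF T(2)]) (simp only: g_def alg2)
    have "e * - a - (r * sin (b * t + oint0 g t))\<^sup>2 - (r * cos (b * t + oint0 g t))\<^sup>2 - (- a)\<^sup>2 = 0"
      using sc[of "b * t + oint0 g t"] r2 by (simp add: algebra_simps power2_eq_square)
    then show "((\<lambda>t. - a) has_real_derivative
        (e * - a - (r * sin (b * t + oint0 g t))\<^sup>2 - (r * cos (b * t + oint0 g t))\<^sup>2 - (- a)\<^sup>2) * (1 + \<alpha>1 t + \<alpha>2 t)) (at t)"
      by simp
  next
    show "periodic_with (2 * pi / \<bar>b\<bar>) (\<lambda>t. r * sin (b * t + oint0 g t))" by (rule T(3))
  next
    show "periodic_with (2 * pi / \<bar>b\<bar>) (\<lambda>t. r * cos (b * t + oint0 g t))" by (rule T(4))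
  next
    show "periodic_with (2 * pi / \<bar>b\<bar>) (\<lambda>t. - a)" by (simp add: periodic_with_def)
  qed
next
  assume H: "periodic_with (2 * pi / \<bar>b\<bar>) (\<lambda>t. b * \<alpha>1 t + \<alpha>3 t + a ^ 4 * \<alpha>4 t)
       \<and> odd_fun (\<lambda>t. b * \<alpha>1 t + \<alpha>3 t + a ^ 4 * \<alpha>4 t)"
  define g where "g = (\<lambda>t. b * \<alpha>1 t + \<alpha>3 t + a ^ 4 * \<alpha>4 t)"
  have gc: "continuous_on UNIV g" unfolding g_def
    by (intro continuous_intros assms)
  have per: "periodic_with (2 * pi / \<bar>b\<bar>) g" and od: "odd_fun g" using H unfolding g_def by blast+
  have sc: "\<And>u. (a * sin u)\<^sup>2 + (a * cos u)\<^sup>2 = a\<^sup>2"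
  proof -
    fix u
    have "(a * sin u)\<^sup>2 + (a * cos u)\<^sup>2 = a\<^sup>2 * ((sin u)\<^sup>2 + (cos u)\<^sup>2)"
      by (simp only: power_mult_distrib distrib_left)
    then show "(a * sin u)\<^sup>2 + (a * cos u)\<^sup>2 = a\<^sup>2" by (simp only: sin_cos_squared_add mult_1_right)
  qed
  note T = theta_facts[OF assms(1) gc od per, of a]
  show "let \<theta> = (\<lambda>t. b * t + oint0 (\<lambda>s. b * \<alpha>1 s + \<alpha>3 s + a ^ 4 * \<alpha>4 s) t);
          x = (\<lambda>t. a * sin (\<theta> t));
          y = (\<lambda>t. a * cos (\<theta> t));
          z = (\<lambda>t. - a)
      in (\<forall>t.
            (x has_real_derivative
               ((a * x t + b * y t + x t * z t) * (1 + \<alpha>1 t) + x t * (a + z t) * \<alpha>2 t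
                + y t * \<alpha>3 t
                - y t * ((x t)\<^sup>2 + (y t)\<^sup>2) * (4 * a * z t + (x t)\<^sup>2 + (y t)\<^sup>2 + 2 * (z t)\<^sup>2)
                  * \<alpha>4 t)) (at t)
          \<and> (y has_real_derivative
               ((- b * x t + a * y t + y t * z t) * (1 + \<alpha>1 t) + y t * (a + z t) * \<alpha>2 t
                - x t * \<alpha>3 t
                + x t * ((x t)\<^sup>2 + (y t)\<^sup>2) * (4 * a * z t + (x t)\<^sup>2 + (y t)\<^sup>2 + 2 * (z t)\<^sup>2)
                  * \<alpha>4 t)) (at t)
          \<and> (z has_real_derivative
               (- (2 * a * z t + (x t)\<^sup>2 + (y t)\<^sup>2 + (z t)\<^sup>2) * (1 + \<alpha>1 t + \<alpha>2 t))) (at t))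
         \<and> periodic_with (2 * pi / \<bar>b\<bar>) x
         \<and> periodic_with (2 * pi / \<bar>b\<bar>) y
         \<and> periodic_with (2 * pi / \<bar>b\<bar>) z"
    unfolding Let_def g_def[symmetric]
  proof (intro conjI allI)
    fix t
    note h = sc[of "b * t + oint0 g t"]
    have gt: "g t = b * \<alpha>1 t + \<alpha>3 t + a ^ 4 * \<alpha>4 t" by (simp add: g_def)
    show "((\<lambda>t. a * sin (b * t + oint0 g t)) has_real_derivative
        (a * (a * sin (b * t + oint0 g t)) + b * (a * cos (b * t + oint0 g t)) + a * sin (b * t + oint0 g t) * - a) * (1 + \<alpha>1 t) +
        a * sin (b * t + oint0 g t) * (a + - a) * \<alpha>2 t + a * cos (b * t + oint0 g t) * \<alpha>3 t
        - a * cos (b * t + oint0 g t) * ((a * sin (b * t + oint0 g t))\<^sup>2 + (a * cos (b * t + oint0 g t))\<^sup>2)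
          * (4 * a * - a + (a * sin (b * t + oint0 g t))\<^sup>2 + (a * cos (b * t + oint0 g t))\<^sup>2 + 2 * (- a)\<^sup>2) * \<alpha>4 t) (at t)"
      by (rule DERIV_cong[OF T(1)]) (simp only: gt alg3[OF h])
    show "((\<lambda>t. a * cos (b * t + oint0 g t)) has_real_derivative
        (- b * (a * sin (b * t + oint0 g t)) + a * (a * cos (b * t + oint0 g t)) + a * cos (b * t + oint0 g t) * - a) * (1 + \<alpha>1 t) +
        a * cos (b * t + oint0 g t) * (a + - a) * \<alpha>2 t - a * sin (b * t + oint0 g t) * \<alpha>3 t
        + a * sin (b * t + oint0 g t) * ((a * sin (b * t + oint0 g t))\<^sup>2 + (a * cos (b * t + oint0 g t))\<^sup>2)
          * (4 * a * - a + (a * sin (b * t + oint0 g t))\<^sup>2 + (a * cos (b * t + oint0 g t))\<^sup>2 + 2 * (- a)\<^sup>2) * \<alpha>4 t) (at t)"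
      by (rule DERIV_cong[OF T(2)]) (simp only: gt alg4[OF h])
    show "((\<lambda>t. - a) has_real_derivative
        - (2 * a * - a + (a * sin (b * t + oint0 g t))\<^sup>2 + (a * cos (b * t + oint0 g t))\<^sup>2 + (- a)\<^sup>2) * (1 + \<alpha>1 t + \<alpha>2 t)) (at t)"
      by (simp only: alg5[OF h] mult_zero_left DERIV_const)
  next
    show "periodic_with (2 * pi / \<bar>b\<bar>) (\<lambda>t. a * sin (b * t + oint0 g t))" by (rule T(3))
  next
    show "periodic_with (2 * pi / \<bar>b\<bar>) (\<lambda>t. a * cos (b * t + oint0 g t))" by (rule T(4))
  next
    show "periodic_with (2 * pi / \<bar>b\<bar>) (\<lambda>t. - a)" by (simp add: periodic_with_def)
  qed
qed

end
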